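(* For each $k\in\mathbb{N}$ there is a graph of treewidth at most $k$ that contains every graph of treewidth at most $k$ as an induced subgraph.
   Context: All graphs are simple and countable. Treewidth is defined via tree-decompositions (bags indexed by a tree, each edge contained in a bag, each vertex's bags forming a nonempty subtree; width = maximum bag size minus one; treewidth = minimum width). *)

theory Defs
  imports Main "HOL-Library.Countable_Set"
begin

definition simple_graph :: "'a set \<Rightarrow> ('a \<Rightarrow> 'a \<Rightarrow> bool) \<Rightarrow> bool" where
  "simple_graph V E \<longleftrightarrow>
     (\<forall>u v. E u v \<longrightarrow> u \<in> V \<and> v \<in> V \<and> u \<noteq> v \<and> E v u)"

definition is_walk :: "('a \<Rightarrow> 'a \<Rightarrow> bool) \<Rightarrow> 'a list \<Rightarrow> bool" where
  "is_walk E p \<longleftrightarrow> p \<noteq> [] \<and> (\<forall>i. Suc i < length p \<longrightarrow> E (p ! i) (p ! Suc i))"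

definition connected_set :: "('a \<Rightarrow> 'a \<Rightarrow> bool) \<Rightarrow> 'a set \<Rightarrow> bool" where
  "connected_set E S \<longleftrightarrow>
     (\<forall>x\<in>S. \<forall>y\<in>S. \<exists>p. is_walk E p \<and> hd p = x \<and> last p = y \<and> set p \<subseteq> S)"

definition has_cycle :: "('a \<Rightarrow> 'a \<Rightarrow> bool) \<Rightarrow> bool" where
  "has_cycle E \<longleftrightarrow>
     (\<exists>p. length p \<ge> 3 \<and> distinct p \<and> is_walk E p \<and> E (last p) (hd p))"

definition is_tree :: "'a set \<Rightarrow> ('a \<Rightarrow> 'a \<Rightarrow> bool) \<Rightarrow> bool" where
  "is_tree I A \<longleftrightarrow> simple_graph I A \<and> I \<noteq> {} \<and> connected_set A I \<and> \<not> has_cycle A"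

definition tree_decomposition ::
  "'a set \<Rightarrow> ('a \<Rightarrow> 'a \<Rightarrow> bool) \<Rightarrow> 't set \<Rightarrow> ('t \<Rightarrow> 't \<Rightarrow> bool) \<Rightarrow> ('t \<Rightarrow> 'a set) \<Rightarrow> bool" where
  "tree_decomposition V E I A B \<longleftrightarrow>
     is_tree I A \<and>
     (\<forall>t\<in>I. B t \<subseteq> V) \<and>
     (\<forall>u v. E u v \<longrightarrow> (\<exists>t\<in>I. u \<in> B t \<and> v \<in> B t)) \<and>
     (\<forall>v\<in>V. {t\<in>I. v \<in> B t} \<noteq> {} \<and> connected_set A {t\<in>I. v \<in> B t})"

definition width_le :: "'t set \<Rightarrow> ('t \<Rightarrow> 'a set) \<Rightarrow> nat \<Rightarrow> bool" where
  "width_le I B k \<longleftrightarrow> (\<forall>t\<in>I. finite (B t) \<and> card (B t) \<le> k + 1)"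

text \<open>Treewidth at most k (the minimum width is at most k iff some decomposition has
  width at most k).  Decomposition trees are indexed by natural numbers; for countable
  graphs this is no restriction.\<close>
definition treewidth_le :: "'a set \<Rightarrow> ('a \<Rightarrow> 'a \<Rightarrow> bool) \<Rightarrow> nat \<Rightarrow> bool" where
  "treewidth_le V E k \<longleftrightarrow>
     (\<exists>(I::nat set) A B. tree_decomposition V E I A B \<and> width_le I B k)"

definition induced_subgraph_of ::
  "'a set \<Rightarrow> ('a \<Rightarrow> 'a \<Rightarrow> bool) \<Rightarrow> 'b set \<Rightarrow> ('b \<Rightarrow> 'b \<Rightarrow> bool) \<Rightarrow> bool" where
  "induced_subgraph_of V E W F \<longleftrightarrow>
     (\<exists>f. inj_on f V \<and> f ` V \<subseteq> W \<and> (\<forall>u\<in>V. \<forall>v\<in>V. E u v \<longleftrightarrow> F (f u) (f v)))"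

end

theory Submission
  imports Defs "HOL-Library.Nat_Bijection"
begin


lemma is_walk_Nil[simp]: "\<not> is_walk E []"
  by (simp add: is_walk_def)

lemma is_walk_single[simp]: "is_walk E [x]"
  by (simp add: is_walk_def)

lemma is_walk_Cons2[simp]: "is_walk E (x # y # p) \<longleftrightarrow> E x y \<and> is_walk E (y # p)"
proof
  assume "is_walk E (x # y # p)"
  then have h: "\<And>i. Suc i < length (x # y # p) \<Longrightarrow> E ((x # y # p) ! i) ((x # y # p) ! Suc i)"
    unfolding is_walk_def by blast
  have "E x y" using h[of 0] by simp
  moreover have "is_walk E (y # p)" unfolding is_walk_def
  proof (intro conjI allI impI)
    fix i assume "Suc i < length (y # p)"
    then show "E ((y # p) ! i) ((y # p) ! Suc i)" using h[of "Suc i"] by simp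
  qed simp
  ultimately show "E x y \<and> is_walk E (y # p)" by blast
next
  assume a: "E x y \<and> is_walk E (y # p)"
  show "is_walk E (x # y # p)" unfolding is_walk_def
  proof (intro conjI allI impI)
    fix i assume i: "Suc i < length (x # y # p)"
    show "E ((x # y # p) ! i) ((x # y # p) ! Suc i)"
    proof (cases i)
      case 0 then show ?thesis using a by simp
    next
      case (Suc j) then show ?thesis using a i unfolding is_walk_def by simp
    qed
  qed simp
qed

lemma is_walk_ConsI: "E x (hd p) \<Longrightarrow> is_walk E p \<Longrightarrow> is_walk E (x # p)"
  by (cases p) simp_all

lemma is_walk_append:
  assumes "is_walk E xs" "is_walk E ys" "E (last xs) (hd ys)"
  shows "is_walk E (xs @ ys)"
  using assms
proof (induction xs)
  case Nil then show ?case by (simp add: is_walk_def)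
next
  case (Cons a xs)
  show ?case
  proof (cases xs)
    case Nil
    then show ?thesis using Cons.prems by (auto intro: is_walk_ConsI)
  next
    case (Cons b zs)
    then show ?thesis using Cons.prems Cons.IH by auto
  qed
qed


lemma is_walk_snoc: "is_walk E p \<Longrightarrow> E (last p) y \<Longrightarrow> is_walk E (p @ [y])"
  by (rule is_walk_append) auto

lemma is_walk_rev:
  assumes "\<And>u v. E u v \<Longrightarrow> E v u" "is_walk E p"
  shows "is_walk E (rev p)"
  using assms(2)
proof (induction p)
  case Nil then show ?case by (simp add: is_walk_def)
next
  case (Cons a p)
  show ?case
  proof (cases p)
    case Nil then show ?thesis by simp
  next
    case (Cons b q)
    from Cons.prems Cons have "is_walk E p" "E a b" by auto
    then have "is_walk E (rev p)" "E b a" using Cons.IH assms(1) by blast+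
    have "last (rev p) = b" using Cons by (simp add: last_rev)
    then show ?thesis using is_walk_snoc[of E "rev p" a] \<open>is_walk E (rev p)\<close> \<open>E b a\<close> by simp
  qed
qed

lemma is_walk_map_upt:
  assumes "\<And>i. Suc i < n \<Longrightarrow> E (f i) (f (Suc i))" "0 < n"
  shows "is_walk E (map f [0..<n])"
  using assms by (auto simp: is_walk_def)

lemma is_walk_butlast:
  assumes "is_walk E p" "length p \<ge> 2"
  shows "is_walk E (butlast p)"
proof -
  have "butlast p \<noteq> []" using assms(2) by (cases p) auto
  then show ?thesis using assms(1) unfolding is_walk_def by (auto simp: nth_butlast)
qed

definition reach :: "('a \<Rightarrow> 'a \<Rightarrow> bool) \<Rightarrow> 'a set \<Rightarrow> 'a \<Rightarrow> 'a \<Rightarrow> bool" where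
  "reach E S x y \<longleftrightarrow> (\<exists>p. is_walk E p \<and> hd p = x \<and> last p = y \<and> set p \<subseteq> S)"

lemma reach_refl: "x \<in> S \<Longrightarrow> reach E S x x"
  unfolding reach_def by (rule exI[of _ "[x]"]) auto

lemma reach_step: "E x y \<Longrightarrow> x \<in> S \<Longrightarrow> reach E S y z \<Longrightarrow> reach E S x z"
  unfolding reach_def
  apply clarify
  subgoal for p by (rule exI[of _ "x # p"]) (auto intro: is_walk_ConsI)
  done

lemma reach_trans:
  assumes "reach E S x y" "reach E S y z" shows "reach E S x z"
proof -
  obtain p where p: "is_walk E p" "hd p = x" "last p = y" "set p \<subseteq> S"
    using assms(1) unfolding reach_def by blast
  then show ?thesis using assms(2)
  proof (induction p arbitrary: x)
    case Nil then show ?case by (simp add: is_walk_def)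
  next
    case (Cons a p)
    show ?case
    proof (cases p)
      case Nil then show ?thesis using Cons.prems by simp
    next
      case (Cons b q)
      with Cons.prems have "E a b" "is_walk E p" by auto
      moreover have "reach E S b z" using Cons.IH[of b] Cons.prems \<open>is_walk E p\<close> Cons by auto
      ultimately show ?thesis using Cons.prems by (auto intro: reach_step)
    qed
  qed
qed

lemma reach_sym:
  assumes "\<And>u v. E u v \<Longrightarrow> E v u" "reach E S x y" shows "reach E S y x"
proof -
  obtain p where p: "is_walk E p" "hd p = x" "last p = y" "set p \<subseteq> S"
    using assms(2) unfolding reach_def by blast
  then have "p \<noteq> []" by (simp add: is_walk_def)
  have "is_walk E (rev p)" using is_walk_rev[of E p] assms(1) p(1) by blast
  then show ?thesis unfolding reach_def using p \<open>p \<noteq> []\<close>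
    by (intro exI[of _ "rev p"]) (auto simp: hd_rev last_rev)
qed

lemma connected_set_via:
  assumes "\<And>u v. E u v \<Longrightarrow> E v u" "c \<in> S" "\<And>x. x \<in> S \<Longrightarrow> reach E S x c"
  shows "connected_set E S"
proof -
  have "reach E S x y" if "x \<in> S" "y \<in> S" for x y
    using reach_trans[OF assms(3)[OF that(1)] reach_sym[of E, OF assms(1) assms(3)[OF that(2)]]] by blast
  then show ?thesis unfolding connected_set_def reach_def by blast
qed

lemma connected_set_reach: "connected_set E S \<Longrightarrow> x \<in> S \<Longrightarrow> y \<in> S \<Longrightarrow> reach E S x y"
  unfolding connected_set_def reach_def by blast



lemma cyc_adj:
  assumes "is_walk E p" "E (last p) (hd p)" "j < length p"
  shows "E (p ! j) (p ! (Suc j mod length p))"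
proof (cases "Suc j < length p")
  case True then show ?thesis using assms(1) unfolding is_walk_def by simp
next
  case False
  then have "Suc j = length p" using assms(3) by simp
  moreover have "p \<noteq> []" using assms(1) by auto
  ultimately show ?thesis using assms(2)
    by (simp add: last_conv_nth hd_conv_nth del: One_nat_def) (metis diff_Suc_1)
qed

lemma cyc_prev:
  assumes "(n::nat) \<ge> 3" "i < n"
  defines "j \<equiv> (if i = 0 then n - 1 else i - 1)"
  shows "j < n" "Suc j mod n = i" "j \<noteq> Suc i mod n" "Suc i mod n < n"
  using assms by (auto simp: mod_Suc)

locale elim =
  fixes V :: "nat set" and H :: "nat \<Rightarrow> nat \<Rightarrow> bool" and k :: nat
  assumes Hsym: "\<And>u v. H u v \<Longrightarrow> u \<in> V \<and> v \<in> V \<and> u \<noteq> v \<and> H v u"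
  and Nfin: "\<And>v. v \<in> V \<Longrightarrow> finite {u. H u v \<and> u < v} \<and> card {u. H u v \<and> u < v} \<le> k"
  and Ncl: "\<And>v a b. v \<in> V \<Longrightarrow> H a v \<Longrightarrow> a < v \<Longrightarrow> H b v \<Longrightarrow> b < v \<Longrightarrow> a < b \<Longrightarrow> H a b"
begin

definition N where "N v = {u. H u v \<and> u < v}"
definition pn where "pn v = (if N v = {} then 0 else Suc (Max (N v)))"
definition II where "II = insert 0 (Suc ` V)"
definition AA where "AA x y \<longleftrightarrow> x \<in> II \<and> y \<in> II \<and>
   (\<exists>v\<in>V. (x = Suc v \<and> y = pn v) \<or> (y = Suc v \<and> x = pn v))"
definition BB where "BB t = (if t = 0 then {} else insert (t - 1) (N (t - 1)))"

lemma N_fin: "v \<in> V \<Longrightarrow> finite (N v)"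
  using Nfin N_def by auto

lemma N_sub: "N v \<subseteq> V"
  using Hsym N_def by auto

lemma Max_N: "v \<in> V \<Longrightarrow> N v \<noteq> {} \<Longrightarrow> Max (N v) \<in> N v"
  using N_fin by auto

lemma pn_lt: "v \<in> V \<Longrightarrow> pn v < Suc v"
  using Max_N[of v] by (auto simp: pn_def N_def)

lemma pn_I: "v \<in> V \<Longrightarrow> pn v \<in> II"
  using Max_N[of v] N_sub by (auto simp: pn_def II_def)

lemma AA_sym: "AA x y \<Longrightarrow> AA y x"
  unfolding AA_def by blast

lemma simple: "simple_graph II AA"
  unfolding simple_graph_def
proof (intro allI impI conjI)
  fix u v assume a: "AA u v"
  then show "u \<in> II" "v \<in> II" "AA v u" using AA_sym by (auto simp: AA_def)
  show "u \<noteq> v" using a pn_lt unfolding AA_def by fastforce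
qed

lemma reach_root: "x \<in> II \<Longrightarrow> reach AA II x 0"
proof (induction x rule: less_induct)
  case (less x)
  show ?case
  proof (cases "x = 0")
    case True then show ?thesis using less.prems by (simp add: reach_refl)
  next
    case False
    then obtain v where v: "v \<in> V" "x = Suc v" using less.prems by (auto simp: II_def)
    then have "AA x (pn v)" using pn_I less.prems by (auto simp: AA_def)
    moreover have "reach AA II (pn v) 0" using less.IH pn_lt pn_I v by auto
    ultimately show ?thesis using less.prems reach_step by metis
  qed
qed

lemma conn: "connected_set AA II"
proof (rule connected_set_via[of AA 0])
  show "0 \<in> II" by (simp add: II_def)
qed (auto simp: AA_sym reach_root)

lemma acyc: "\<not> has_cycle AA"
proof
  assume "has_cycle AA"
  then obtain p where p: "length p \<ge> 3" "distinct p" "is_walk AA p" "AA (last p) (hd p)"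
    unfolding has_cycle_def by blast
  define n where "n = length p"
  have ne: "p \<noteq> []" using p by auto
  define M where "M = Max (set p)"
  have M: "M \<in> set p" "\<And>y. y \<in> set p \<Longrightarrow> y \<le> M" using ne by (auto simp: M_def)
  obtain i where i: "i < n" "p ! i = M" using M(1) by (auto simp: n_def in_set_conv_nth)
  define j where "j = (if i = 0 then n - 1 else i - 1)"
  have n3: "n \<ge> 3" using p n_def by simp
  note cp = cyc_prev[OF n3 i(1), folded j_def]
  have "AA (p ! i) (p ! (Suc i mod n))" using cyc_adj[OF p(3) p(4), of i] i(1) n_def by simp
  then have a1: "AA M (p ! (Suc i mod n))" using i(2) by simp
  have a2: "AA M (p ! j)" using cyc_adj[OF p(3) p(4), of j] cp i AA_sym by (simp add: n_def)
  have key: "\<And>y. AA M y \<Longrightarrow> y \<in> set p \<Longrightarrow> (\<exists>v\<in>V. M = Suc v \<and> y = pn v)"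
  proof -
    fix y assume "AA M y" "y \<in> set p"
    then obtain v where v: "v \<in> V" "(M = Suc v \<and> y = pn v) \<or> (y = Suc v \<and> M = pn v)"
      unfolding AA_def by blast
    have "\<not> (y = Suc v \<and> M = pn v)"
      using pn_lt[OF v(1)] M(2)[OF \<open>y \<in> set p\<close>] by auto
    then show "\<exists>v\<in>V. M = Suc v \<and> y = pn v" using v by blast
  qed
  have "p ! (Suc i mod n) \<in> set p" "p ! j \<in> set p" using cp by (auto simp: n_def)
  then have "p ! (Suc i mod n) = p ! j" using key[OF a1] key[OF a2] by auto
  moreover have "p ! (Suc i mod n) \<noteq> p ! j"
    using p(2) cp by (simp add: n_def nth_eq_iff_index_eq)
  ultimately show False by simp
qed

lemma tree: "is_tree II AA"
  unfolding is_tree_def using simple conn acyc by (auto simp: II_def)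

lemma subtree_reach:
  assumes v: "v \<in> V"
  shows "w \<in> V \<Longrightarrow> v \<in> N w \<or> v = w \<Longrightarrow> reach AA {t \<in> II. v \<in> BB t} (Suc w) (Suc v)"
proof (induction w rule: less_induct)
  case (less w)
  let ?S = "{t \<in> II. v \<in> BB t}"
  show ?case
  proof (cases "v = w")
    case True
    have "Suc v \<in> {t \<in> II. v \<in> BB t}" using v by (auto simp: II_def BB_def)
    then show ?thesis using True reach_refl by metis
  next
    case False
    then have vN: "v \<in> N w" using less.prems by auto
    define q where "q = Max (N w)"
    have qN: "q \<in> N w" using Max_N[OF less.prems(1)] vN q_def by auto
    have vq: "v \<le> q" using N_fin[OF less.prems(1)] vN q_def by auto
    have pw: "pn w = Suc q" using vN by (auto simp: pn_def q_def)
    have qV: "q \<in> V" using qN N_sub by auto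
    have step: "AA (Suc w) (Suc q)" using pw less.prems(1) pn_I[of w]
      by (auto simp: AA_def II_def)
    have inS: "Suc w \<in> ?S" using less.prems vN by (auto simp: II_def BB_def)
    have "v \<in> N q \<or> v = q"
    proof (cases "v = q")
      case False
      then have "v < q" using vq by simp
      moreover have "H v w" "v < w" "H q w" "q < w" using vN qN by (auto simp: N_def)
      ultimately have "H v q" using Ncl[OF less.prems(1)] by blast
      then show ?thesis using \<open>v < q\<close> by (simp add: N_def)
    qed simp
    moreover have "q < w" using qN by (simp add: N_def)
    ultimately have "reach AA ?S (Suc q) (Suc v)" using less.IH qV by blast
    then show ?thesis using reach_step[of AA "Suc w" "Suc q" ?S "Suc v"] step inS by blast
  qed
qed

lemma td: assumes EH: "\<And>u v. E u v \<Longrightarrow> H u v"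
  shows "tree_decomposition V E II AA BB"
  unfolding tree_decomposition_def
proof (intro conjI ballI allI impI)
  show "is_tree II AA" by (rule tree)
  fix t assume "t \<in> II" then show "BB t \<subseteq> V" using N_sub by (auto simp: II_def BB_def)
next
  fix u v assume "E u v"
  then have h: "H u v" "H v u" "u \<noteq> v" using EH Hsym by blast+
  then have "u \<in> V" "v \<in> V" using Hsym by blast+
  show "\<exists>t\<in>II. u \<in> BB t \<and> v \<in> BB t"
  proof (cases "u < v")
    case True then show ?thesis using h \<open>v \<in> V\<close>
      by (intro bexI[of _ "Suc v"]) (auto simp: BB_def N_def II_def)
  next
    case False then have "v < u" using h by simp
    then show ?thesis using h \<open>u \<in> V\<close>
      by (intro bexI[of _ "Suc u"]) (auto simp: BB_def N_def II_def)
  qed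
next
  fix v assume v: "v \<in> V"
  let ?S = "{t \<in> II. v \<in> BB t}"
  have vS: "Suc v \<in> ?S" using v by (auto simp: II_def BB_def)
  then show "?S \<noteq> {}" by blast
  show "connected_set AA ?S"
  proof (rule connected_set_via[of AA "Suc v"])
    fix x assume "x \<in> ?S"
    then obtain w where "w \<in> V" "x = Suc w" "v \<in> N w \<or> v = w"
      by (auto simp: II_def BB_def)
    then show "reach AA ?S x (Suc v)" using subtree_reach[OF v] by blast
  qed (use v in \<open>auto simp: AA_sym II_def BB_def\<close>)
qed

lemma width: "width_le II BB k"
  unfolding width_le_def
proof
  fix t assume "t \<in> II"
  show "finite (BB t) \<and> card (BB t) \<le> k + 1"
  proof (cases "t = 0")
    case False
    then obtain w where w: "w \<in> V" "t = Suc w" using \<open>t \<in> II\<close> by (auto simp: II_def)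
    have "card (insert w (N w)) \<le> Suc (card (N w))" by (simp add: card_insert_le_m1 N_fin[OF w(1)])
    then show ?thesis using w N_fin[OF w(1)] Nfin[OF w(1)] by (auto simp: BB_def N_def)
  qed (simp add: BB_def)
qed

lemma tw: assumes "\<And>u v. E u v \<Longrightarrow> H u v" shows "treewidth_le V E k"
  unfolding treewidth_le_def using td[OF assms] width by blast

end



definition enc :: "nat \<Rightarrow> nat set \<Rightarrow> nat set \<Rightarrow> nat" where
  "enc t F S = prod_encode (t, prod_encode (set_encode F, set_encode S))"
definition tagof where "tagof x = fst (prod_decode x)"
definition parF where "parF x = set_decode (fst (prod_decode (snd (prod_decode x))))"
definition selS where "selS x = set_decode (snd (prod_decode (snd (prod_decode x))))"

lemma dec_enc: "finite F \<Longrightarrow> finite S \<Longrightarrow> tagof (enc t F S) = t \<and> parF (enc t F S) = F \<and> selS (enc t F S) = S"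
  by (simp add: enc_def tagof_def parF_def selS_def)

lemma set_decode_lt: "y \<in> set_decode n \<Longrightarrow> y < n"
proof -
  assume "y \<in> set_decode n"
  then have "odd (n div 2 ^ y)" by (simp add: set_decode_def)
  then have "n div 2 ^ y \<noteq> 0" by (metis dvd_0_right)
  then have "2 ^ y \<le> n" by (simp add: div_eq_0_iff not_less)
  moreover have "y < 2 ^ y" by (rule less_exp)
  ultimately show ?thesis by linarith
qed

lemma fst_dec_le: "fst (prod_decode n) \<le> n"
proof -
  obtain a b where "prod_decode n = (a, b)" by (cases "prod_decode n")
  then have "n = prod_encode (a, b)" by (metis prod_decode_inverse)
  then show ?thesis using le_prod_encode_1[where a=a and b=b] \<open>prod_decode n = (a, b)\<close> by simp
qed

lemma snd_dec_le: "snd (prod_decode n) \<le> n"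
proof -
  obtain a b where "prod_decode n = (a, b)" by (cases "prod_decode n")
  then have "n = prod_encode (a, b)" by (metis prod_decode_inverse)
  then show ?thesis using le_prod_encode_2[where a=a and b=b] \<open>prod_decode n = (a, b)\<close> by simp
qed

lemma parF_lt: "y \<in> parF x \<Longrightarrow> y < x"
proof -
  assume "y \<in> parF x"
  then have "y < fst (prod_decode (snd (prod_decode x)))" by (simp add: parF_def set_decode_lt)
  also have "\<dots> \<le> snd (prod_decode x)" by (rule fst_dec_le)
  also have "\<dots> \<le> x" by (rule snd_dec_le)
  finally show ?thesis .
qed

inductive valid :: "nat \<Rightarrow> nat \<Rightarrow> bool" for k where
  "finite F \<Longrightarrow> card F \<le> k \<Longrightarrow> (\<forall>y\<in>F. valid k y) \<Longrightarrow> (\<forall>a\<in>F. \<forall>b\<in>F. a < b \<longrightarrow> a \<in> parF b)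
    \<Longrightarrow> S \<subseteq> F \<Longrightarrow> valid k (enc t F S)"

lemma validD:
  assumes "valid k x"
  shows "finite (parF x)" "card (parF x) \<le> k" "\<And>y. y \<in> parF x \<Longrightarrow> valid k y"
    "\<And>a b. a \<in> parF x \<Longrightarrow> b \<in> parF x \<Longrightarrow> a < b \<Longrightarrow> a \<in> parF b" "selS x \<subseteq> parF x"
  using assms by (cases rule: valid.cases; simp add: dec_enc finite_subset)+

definition WW where "WW k = {x. valid k x}"
definition HW where "HW k x y \<longleftrightarrow> valid k x \<and> valid k y \<and> (x \<in> parF y \<or> y \<in> parF x)"
definition FW where "FW k x y \<longleftrightarrow> valid k x \<and> valid k y \<and> (x \<in> selS y \<or> y \<in> selS x)"

lemma W_elim: "elim (WW k) (HW k) k"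
proof
  fix u v assume "HW k u v"
  then show "u \<in> WW k \<and> v \<in> WW k \<and> u \<noteq> v \<and> HW k v u"
    unfolding HW_def WW_def using parF_lt by blast
next
  fix v assume v: "v \<in> WW k"
  then have vv: "valid k v" by (simp add: WW_def)
  have "{u. HW k u v \<and> u < v} = parF v"
  proof safe
    fix u assume "HW k u v" "u < v"
    then show "u \<in> parF v" unfolding HW_def using parF_lt[of v u] by auto
  next
    fix u assume "u \<in> parF v"
    then show "HW k u v" "u < v" using validD(3)[OF vv] vv parF_lt unfolding HW_def by auto
  qed
  then show "finite {u. HW k u v \<and> u < v} \<and> card {u. HW k u v \<and> u < v} \<le> k"
    using validD(1,2)[OF vv] by simp
next
  fix v a b assume v: "v \<in> WW k" and h: "HW k a v" "a < v" "HW k b v" "b < v" "a < b"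
  then have vv: "valid k v" by (simp add: WW_def)
  have "a \<in> parF v" "b \<in> parF v" using h parF_lt unfolding HW_def by (meson not_less_iff_gr_or_eq)+
  then have "a \<in> parF b" using validD(4)[OF vv] h by blast
  then show "HW k a b" using h unfolding HW_def by blast
qed

lemma W_tw: "treewidth_le (WW k) (FW k) k"
proof -
  interpret elim "WW k" "HW k" k by (rule W_elim)
  show ?thesis
    by (rule tw) (auto simp: FW_def HW_def dest: validD(5))
qed

lemma W_simple: "simple_graph (WW k) (FW k)"
  unfolding simple_graph_def
proof (intro allI impI)
  fix u v assume a: "FW k u v"
  then have "u \<in> selS v \<or> v \<in> selS u" "valid k u" "valid k v" by (auto simp: FW_def)
  then have "u < v \<or> v < u" using validD(5) parF_lt by blast
  then show "u \<in> WW k \<and> v \<in> WW k \<and> u \<noteq> v \<and> FW k v u"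
    using a by (auto simp: FW_def WW_def)
qed

locale relim =
  fixes V :: "nat set" and E H :: "nat \<Rightarrow> nat \<Rightarrow> bool" and r :: "nat \<Rightarrow> nat" and k :: nat
  assumes Esym: "\<And>u v. E u v \<Longrightarrow> E v u"
  and EH: "\<And>u v. E u v \<Longrightarrow> H u v"
  and Hsym: "\<And>u v. H u v \<Longrightarrow> u \<in> V \<and> v \<in> V \<and> u \<noteq> v \<and> H v u"
  and Nfin: "\<And>v. v \<in> V \<Longrightarrow> finite {u. H u v \<and> (r u < r v \<or> (r u = r v \<and> u < v))}
               \<and> card {u. H u v \<and> (r u < r v \<or> (r u = r v \<and> u < v))} \<le> k"
  and Ncl: "\<And>v a b. v \<in> V \<Longrightarrow> a \<in> {u. H u v \<and> (r u < r v \<or> (r u = r v \<and> u < v))}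
               \<Longrightarrow> b \<in> {u. H u v \<and> (r u < r v \<or> (r u = r v \<and> u < v))} \<Longrightarrow> a \<noteq> b \<Longrightarrow> H a b"
begin

definition lt where "lt u v \<longleftrightarrow> r u < r v \<or> (r u = r v \<and> u < v)"
definition Nv where "Nv v = {u. H u v \<and> lt u v}"
definition R where "R = {(u, v). lt u v}"

lemma wfR: "wf R"
proof -
  have "R = inv_image (less_than <*lex*> less_than) (\<lambda>v. (r v, v))"
    by (auto simp: R_def lt_def)
  then show ?thesis by (simp add: wf_lex_prod)
qed

definition f where "f = wfrec R (\<lambda>g v. enc v (g ` Nv v) (g ` {u \<in> Nv v. E u v}))"

lemma Nv_fin: "finite (Nv v)"
proof (cases "v \<in> V")
  case True then show ?thesis using Nfin[OF True] by (simp add: Nv_def lt_def)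
next
  case False then have "Nv v = {}" using Hsym by (auto simp: Nv_def)
  then show ?thesis by simp
qed

lemma f_eq: "f v = enc v (f ` Nv v) (f ` {u \<in> Nv v. E u v})"
proof -
  have 1: "f v = (\<lambda>g v. enc v (g ` Nv v) (g ` {u \<in> Nv v. E u v})) (cut f R v) v"
    unfolding f_def by (rule wfrec[OF wfR])
  have 2: "cut f R v ` Nv v = f ` Nv v"
    by (rule image_cong) (auto simp: cut_apply R_def Nv_def)
  have 3: "cut f R v ` {u \<in> Nv v. E u v} = f ` {u \<in> Nv v. E u v}"
    by (rule image_cong) (auto simp: cut_apply R_def Nv_def)
  show ?thesis unfolding 2[symmetric] 3[symmetric] using 1 by (simp only:)
qed

lemma f_dec: "tagof (f v) = v" "parF (f v) = f ` Nv v" "selS (f v) = f ` {u \<in> Nv v. E u v}"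
proof -
  have fin: "finite (f ` Nv v)" "finite (f ` {u \<in> Nv v. E u v})" using Nv_fin by auto
  note d = dec_enc[OF fin, of v]
  show "tagof (f v) = v" by (subst f_eq) (rule d[THEN conjunct1])
  show "parF (f v) = f ` Nv v" by (subst f_eq) (rule d[THEN conjunct2, THEN conjunct1])
  show "selS (f v) = f ` {u \<in> Nv v. E u v}" by (subst f_eq) (rule d[THEN conjunct2, THEN conjunct2])
qed

lemma f_inj: "inj f"
  by (metis f_dec(1) injI)

lemma lt_total: "u \<noteq> v \<Longrightarrow> lt u v \<or> lt v u"
  by (auto simp: lt_def)

lemma f_valid: "v \<in> V \<Longrightarrow> valid k (f v)"
proof (induction v rule: wf_induct[OF wfR])
  case (1 v)
  have sub: "Nv v \<subseteq> V" using Hsym by (auto simp: Nv_def)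
  have fin: "finite (f ` Nv v)" using Nv_fin by simp
  have "card (f ` Nv v) \<le> card (Nv v)" using Nv_fin by (rule card_image_le)
  also have "\<dots> \<le> k" using Nfin[OF 1(2)] by (simp add: Nv_def lt_def)
  finally have card: "card (f ` Nv v) \<le> k" .
  have allv: "\<forall>y\<in>f ` Nv v. valid k y"
    using 1(1) sub by (auto simp: R_def Nv_def)
  have pw: "\<forall>a\<in>f ` Nv v. \<forall>b\<in>f ` Nv v. a < b \<longrightarrow> a \<in> parF b"
  proof (intro ballI impI)
    fix a b assume a: "a \<in> f ` Nv v" and b: "b \<in> f ` Nv v" and ab: "a < b"
    then obtain x y where xy: "x \<in> Nv v" "y \<in> Nv v" "a = f x" "b = f y" by blast
    then have "x \<noteq> y" using ab by auto
    then have Hxy: "H x y" using Ncl[OF 1(2)] xy by (auto simp: Nv_def lt_def)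
    show "a \<in> parF b"
    proof (cases "lt x y")
      case True then have "x \<in> Nv y" using Hxy by (simp add: Nv_def)
      then show ?thesis using xy f_dec(2)[of y] by simp
    next
      case False then have "lt y x" using lt_total \<open>x \<noteq> y\<close> by blast
      then have "y \<in> Nv x" using Hxy Hsym by (simp add: Nv_def)
      then have "b \<in> parF a" using xy f_dec(2)[of x] by simp
      then show ?thesis using parF_lt ab by fastforce
    qed
  qed
  have "f ` {u \<in> Nv v. E u v} \<subseteq> f ` Nv v" by blast
  from valid.intros[OF fin card allv pw this, of v] show ?case by (subst f_eq)
qed

lemma f_adj:
  assumes "u \<in> V" "v \<in> V"
  shows "E u v \<longleftrightarrow> FW k (f u) (f v)"
proof
  assume e: "E u v"
  then have h: "H u v" "u \<noteq> v" using EH Hsym by blast+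
  have "f u \<in> selS (f v) \<or> f v \<in> selS (f u)"
  proof (cases "lt u v")
    case True then show ?thesis using h e by (auto simp: f_dec(3) Nv_def)
  next
    case False then have "lt v u" using lt_total h by blast
    then show ?thesis using h e Esym Hsym by (auto simp: f_dec(3) Nv_def)
  qed
  then show "FW k (f u) (f v)" using f_valid assms by (auto simp: FW_def)
next
  assume "FW k (f u) (f v)"
  then have "f u \<in> selS (f v) \<or> f v \<in> selS (f u)" by (simp add: FW_def)
  then show "E u v"
  proof
    assume "f u \<in> selS (f v)"
    then obtain w where "w \<in> Nv v" "E w v" "f u = f w" by (auto simp: f_dec(3))
    then show "E u v" using f_inj by (metis injD)
  next
    assume "f v \<in> selS (f u)"
    then obtain w where "w \<in> Nv u" "E w u" "f v = f w" by (auto simp: f_dec(3))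
    then show "E u v" using f_inj Esym by (metis injD)
  qed
qed

lemma embeds: "induced_subgraph_of V E (WW k) (FW k)"
  unfolding induced_subgraph_of_def
  using f_inj f_valid f_adj by (intro exI[of _ f]) (auto simp: WW_def inj_on_def inj_def)

end



lemma is_walk_appendD:
  assumes "is_walk E (xs @ ys)" "xs \<noteq> []" "ys \<noteq> []"
  shows "E (last xs) (hd ys) \<and> is_walk E xs \<and> is_walk E ys"
  using assms
proof (induction xs)
  case Nil then show ?case by simp
next
  case (Cons a xs)
  show ?case
  proof (cases xs)
    case Nil
    then show ?thesis using Cons.prems by (cases ys) auto
  next
    case (Cons b zs)
    then show ?thesis using Cons.prems Cons.IH by auto
  qed
qed

locale rtree =
  fixes I :: "nat set" and A :: "nat \<Rightarrow> nat \<Rightarrow> bool" and \<rho> :: nat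
  assumes tree: "is_tree I A" and root: "\<rho> \<in> I"
begin

lemma Aprops: "A u v \<Longrightarrow> u \<in> I \<and> v \<in> I \<and> u \<noteq> v \<and> A v u"
  using tree unfolding is_tree_def simple_graph_def by blast

lemma Asym: "A u v \<Longrightarrow> A v u" using Aprops by blast

lemma conn: "connected_set A I" using tree by (simp add: is_tree_def)
lemma acyc: "\<not> has_cycle A" using tree by (simp add: is_tree_def)

definition walkto where "walkto w t \<longleftrightarrow> is_walk A w \<and> hd w = \<rho> \<and> last w = t"

definition d where "d t = (LEAST n. \<exists>w. walkto w t \<and> length w = Suc n)"

lemma d_ex: assumes "t \<in> I" shows "\<exists>w. walkto w t \<and> length w = Suc (d t)"
proof -
  obtain w where w: "is_walk A w" "hd w = \<rho>" "last w = t"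
    using conn root assms unfolding connected_set_def by blast
  then have "w \<noteq> []" by auto
  then have "walkto w t \<and> length w = Suc (length w - 1)" using w by (auto simp: walkto_def)
  then have "\<exists>n w. walkto w t \<and> length w = Suc n" by blast
  then show ?thesis unfolding d_def by (rule LeastI_ex)
qed

lemma d_le: assumes "walkto w t" shows "d t \<le> length w - 1"
proof -
  have "w \<noteq> []" using assms by (auto simp: walkto_def)
  then have "walkto w t \<and> length w = Suc (length w - 1)" using assms by auto
  then show ?thesis unfolding d_def by (intro Least_le) blast
qed

lemma d_root: "d \<rho> = 0"
  using d_le[of "[\<rho>]" \<rho>] by (simp add: walkto_def)

lemma d_zero: assumes "t \<in> I" "d t = 0" shows "t = \<rho>"
proof -
  obtain w where "walkto w t" "length w = Suc 0" using d_ex[OF assms(1)] assms(2) by auto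
  then show ?thesis by (cases w) (auto simp: walkto_def)
qed

lemma d_adj: assumes "t \<in> I" "A t s" shows "d s \<le> Suc (d t)"
proof -
  obtain w where w: "walkto w t" "length w = Suc (d t)" using d_ex[OF assms(1)] by blast
  then have "walkto (w @ [s]) s" using assms(2)
    by (auto simp: walkto_def intro: is_walk_snoc) (cases w; simp)
  then show ?thesis using d_le[of "w @ [s]" s] w by simp
qed

lemma par_ex: assumes "t \<in> I" "t \<noteq> \<rho>" shows "\<exists>s. A s t \<and> Suc (d s) = d t"
proof -
  obtain w where w: "walkto w t" "length w = Suc (d t)" using d_ex[OF assms(1)] by blast
  have "d t \<noteq> 0" using d_zero assms by blast
  then have len: "length w \<ge> 2" using w by simp
  define w' where "w' = butlast w"
  have ne: "w' \<noteq> []" using len by (cases w) (auto simp: w'_def)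
  have wd: "w = w' @ [t]" using w len unfolding w'_def walkto_def
    by (metis append_butlast_last_id list.size(3) not_numeral_le_zero)
  have wa: "A (last w') t \<and> is_walk A w'"
    using is_walk_appendD[of A w' "[t]"] w wd ne by (auto simp: walkto_def)
  have "hd w' = \<rho>" using w wd ne by (auto simp: walkto_def)
  then have "walkto w' (last w')" using wa by (simp add: walkto_def)
  then have "d (last w') \<le> length w' - 1" by (rule d_le)
  moreover have "length w' = d t" using w wd by simp
  moreover have "d t \<le> Suc (d (last w'))" using d_adj[of "last w'" t] wa Aprops by blast
  ultimately have "Suc (d (last w')) = d t" using \<open>d t \<noteq> 0\<close> by linarith
  then show ?thesis using wa by blast
qed

definition p where "p t = (if t = \<rho> then \<rho> else SOME s. A s t \<and> Suc (d s) = d t)"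

lemma p_props: assumes "t \<in> I" "t \<noteq> \<rho>" shows "A (p t) t" "Suc (d (p t)) = d t" "p t \<in> I"
proof -
  have "A (p t) t \<and> Suc (d (p t)) = d t"
    unfolding p_def using assms someI_ex[OF par_ex[OF assms]] by simp
  then show "A (p t) t" "Suc (d (p t)) = d t" "p t \<in> I" using Aprops by blast+
qed

definition anc where "anc j t = (p ^^ j) t"

lemma anc_0[simp]: "anc 0 t = t" by (simp add: anc_def)
lemma anc_Suc: "anc (Suc j) t = p (anc j t)" by (simp add: anc_def)
lemma anc_Suc': "anc (Suc j) t = anc j (p t)" by (simp only: anc_def funpow_Suc_right comp_def)
lemma anc_add: "anc i (anc j t) = anc (i + j) t" by (simp add: anc_def funpow_add)

lemma anc_props: assumes "t \<in> I" shows "j \<le> d t \<Longrightarrow> anc j t \<in> I \<and> d (anc j t) = d t - j"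
proof (induction j)
  case 0 then show ?case using assms by simp
next
  case (Suc j)
  then have h: "anc j t \<in> I" "d (anc j t) = d t - j" by auto
  then have "anc j t \<noteq> \<rho>" using Suc.prems d_root by auto
  then show ?case using p_props[OF h(1)] h Suc.prems by (simp add: anc_Suc)
qed

lemma anc_edge: assumes "t \<in> I" "j < d t" shows "A (anc (Suc j) t) (anc j t)"
proof -
  have h: "anc j t \<in> I" "d (anc j t) = d t - j" using anc_props[OF assms(1)] assms(2) by auto
  then have "anc j t \<noteq> \<rho>" using assms(2) d_root by auto
  then show ?thesis using p_props[OF h(1)] by (simp add: anc_Suc)
qed

lemma anc_top: assumes "t \<in> I" shows "anc (d t) t = \<rho>"
  using anc_props[OF assms, of "d t"] d_zero by simp

lemma anc_inj: assumes "t \<in> I" "i \<le> d t" "j \<le> d t" "anc i t = anc j t" shows "i = j"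
  using anc_props[OF assms(1), of i] anc_props[OF assms(1), of j] assms by auto

lemma walk_map_anc: assumes "t \<in> I" "n \<le> d t"
  shows "is_walk A (map (\<lambda>i. anc i t) [0..<Suc n])"
  by (rule is_walk_map_upt) (use assms anc_edge Asym in auto)

lemma T2: assumes st: "A s t" shows "s = p t \<or> t = p s"
proof (rule ccontr)
  assume nt: "\<not> (s = p t \<or> t = p s)"
  have sI: "s \<in> I" and tI: "t \<in> I" and "s \<noteq> t" using Aprops st by auto
  have ds: "d t \<le> Suc (d s)" "d s \<le> Suc (d t)" using d_adj Asym st sI tI by blast+
  define ag where "ag j \<longleftrightarrow> j \<le> d s \<and> j \<le> d t \<and> anc (d s - j) s = anc (d t - j) t" for j
  have ag0: "ag 0" using anc_top sI tI by (simp add: ag_def)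
  have agb: "\<And>j. ag j \<Longrightarrow> j \<le> d s" by (simp add: ag_def)
  define m where "m = (GREATEST j. ag j)"
  have agm: "ag m" unfolding m_def using ag0 agb by (rule GreatestI_nat)
  have mmax: "j \<le> m" if "ag j" for j unfolding m_def using Greatest_le_nat[of ag j "d s"] that agb by blast
  have down: "ag i" if "ag j" "i \<le> j" for i j
  proof -
    have e1: "(j - i) + (d s - j) = d s - i" "(j - i) + (d t - j) = d t - i" and
      e2: "anc (d s - j) s = anc (d t - j) t" and e3: "j \<le> d s" "j \<le> d t"
      using that unfolding ag_def by auto
    have "anc (d s - i) s = anc (j - i) (anc (d s - j) s)" by (simp only: anc_add e1)
    also have "\<dots> = anc (j - i) (anc (d t - j) t)" by (simp only: e2)
    also have "\<dots> = anc (d t - i) t" by (simp only: anc_add e1)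
    finally have "anc (d s - i) s = anc (d t - i) t" .
    moreover have "i \<le> d s" "i \<le> d t" using e3 that(2) by linarith+
    ultimately show ?thesis unfolding ag_def by blast
  qed
  have agm': "m \<le> d s" "m \<le> d t" "anc (d s - m) s = anc (d t - m) t"
    using agm unfolding ag_def by auto
  have ms: "m < d s"
  proof (rule ccontr)
    assume "\<not> m < d s"
    then have md: "m = d s" using agm'(1) by linarith
    have "anc (d t - d s) t = anc (d t - m) t" unfolding md ..
    also have "\<dots> = anc (d s - m) s" using agm'(3) by (rule sym)
    also have "\<dots> = s" unfolding md by simp
    finally have eq: "anc (d t - d s) t = s" .
    have le: "d s \<le> d t" using agm'(2) md by simp
    show False
    proof (cases "d t = d s")
      case True then show False using eq \<open>s \<noteq> t\<close> by simp
    next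
      case False then have "d t - d s = Suc 0" using le ds by linarith
      then have "p t = s" using eq by (simp add: anc_Suc)
      then show False using nt by simp
    qed
  qed
  have mt: "m < d t"
  proof (rule ccontr)
    assume "\<not> m < d t"
    then have md: "m = d t" using agm'(2) by linarith
    have "anc (d s - d t) s = anc (d s - m) s" unfolding md ..
    also have "\<dots> = anc (d t - m) t" using agm'(3) .
    also have "\<dots> = t" unfolding md by simp
    finally have eq: "anc (d s - d t) s = t" .
    have le: "d t \<le> d s" using agm'(1) md by simp
    show False
    proof (cases "d t = d s")
      case True then show False using eq \<open>s \<noteq> t\<close> by simp
    next
      case False then have "d s - d t = Suc 0" using le ds by linarith
      then have "p s = t" using eq by (simp add: anc_Suc)
      then show False using nt by simp
    qed
  qed
  define a where "a = d s - m"
  define b where "b = d t - m"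
  have a1: "a \<ge> 1" "a \<le> d s" and b1: "b \<ge> 1" "b \<le> d t" using ms mt by (auto simp: a_def b_def)
  have c: "anc a s = anc b t" using agm'(3) unfolding a_def b_def .
  define xs where "xs = map (\<lambda>i. anc i s) [0..<Suc a]"
  define ys where "ys = map (\<lambda>i. anc i t) [0..<b]"
  define L where "L = xs @ rev ys"
  have wx: "is_walk A xs" unfolding xs_def using walk_map_anc[OF sI a1(2)] .
  have wy: "is_walk A ys" unfolding ys_def using walk_map_anc[OF tI, of "b - 1"] b1 by simp
  have ysne: "ys \<noteq> []" using b1 by (simp add: ys_def)
  have lastys: "last ys = anc (b - 1) t" using b1 by (simp add: ys_def last_map)
  have hdys: "hd ys = t" using b1 by (simp add: ys_def hd_map)
  have wry: "is_walk A (rev ys)" using is_walk_rev[of A ys] Asym wy by blast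
  have junc: "A (last xs) (hd (rev ys))"
  proof -
    have "last xs = anc b t" using c by (simp add: xs_def)
    moreover have "hd (rev ys) = anc (b - 1) t" using ysne lastys by (simp add: hd_rev)
    moreover have "A (anc (Suc (b - 1)) t) (anc (b - 1) t)" using anc_edge[OF tI, of "b - 1"] b1 by simp
    ultimately show ?thesis using b1 by simp
  qed
  have wL: "is_walk A L" unfolding L_def using is_walk_append[OF wx wry junc] .
  have hdx: "hd xs = s" "xs \<noteq> []" unfolding xs_def by (simp_all add: upt_conv_Cons del: upt_Suc)
  have "last L = t" using ysne hdys by (simp add: L_def last_rev)
  moreover have "hd L = s" using hdx by (simp add: L_def)
  ultimately have close: "A (last L) (hd L)" using st Asym by simp
  have lenL: "length L \<ge> 3" using a1 b1 by (simp add: L_def xs_def ys_def)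
  have dx: "distinct xs" unfolding xs_def distinct_map
    using anc_inj[OF sI] a1 by (auto simp: inj_on_def)
  have dy: "distinct ys" unfolding ys_def distinct_map
    using anc_inj[OF tI] b1 by (auto simp: inj_on_def)
  have disj: "set xs \<inter> set ys = {}"
  proof (rule ccontr)
    assume "set xs \<inter> set ys \<noteq> {}"
    then obtain x where x: "x \<in> set xs" "x \<in> set ys" by blast
    obtain i where i: "i < Suc a" "x = anc i s" using x(1) unfolding xs_def by (auto simp del: upt_Suc)
    obtain i' where i': "i' < b" "x = anc i' t" using x(2) unfolding ys_def by auto
    have ii: "i \<le> a" "i' < b" "anc i s = anc i' t" using i i' by auto
    have "d (anc i s) = d s - i" "d (anc i' t) = d t - i'"
      using anc_props[OF sI, of i] anc_props[OF tI, of i'] ii a1 b1 by auto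
    then have eqd: "d s - i = d t - i'" using ii by simp
    define j where "j = d t - i'"
    have j: "j > m" "j \<le> d s" "j \<le> d t" "d s - j = i" "d t - j = i'"
      using ii eqd a1 b1 by (auto simp: j_def a_def b_def)
    then have "ag j" using ii by (simp add: ag_def)
    then show False using mmax j by fastforce
  qed
  have "distinct L" using dx dy disj by (simp add: L_def)
  then have "has_cycle A" unfolding has_cycle_def using wL close lenL by blast
  then show False using acyc by simp
qed

definition desc where "desc \<tau> x \<longleftrightarrow> x \<in> I \<and> d \<tau> \<le> d x \<and> anc (d x - d \<tau>) x = \<tau>"

lemma desc_step:
  assumes dx: "desc \<tau> x" and xy: "A x y" and yS: "y \<in> S" and top: "\<tau> \<noteq> \<rho> \<Longrightarrow> p \<tau> \<notin> S"
  shows "desc \<tau> y"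
proof -
  have xI: "x \<in> I" and yI: "y \<in> I" and "x \<noteq> y" using Aprops xy by auto
  consider "x = p y" | "y = p x" "x \<noteq> p y" using T2[OF xy] by blast
  then show ?thesis
  proof cases
    case 1
    have "y \<noteq> \<rho>" using 1 \<open>x \<noteq> y\<close> by (auto simp: p_def)
    then have dy: "d y = Suc (d x)" using p_props[OF yI] 1 by simp
    have "anc (d y - d \<tau>) y = anc (d x - d \<tau>) (anc 1 y)"
      using dx dy by (simp add: anc_add desc_def Suc_diff_le)
    also have "\<dots> = \<tau>" using 1 dx by (simp add: desc_def anc_Suc)
    finally show ?thesis using dx dy yI by (simp add: desc_def)
  next
    case 2
    have "x \<noteq> \<rho>" using 2 \<open>x \<noteq> y\<close> by (auto simp: p_def)
    then have dxy: "d x = Suc (d y)" using p_props[OF xI] 2 by simp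
    have "x \<noteq> \<tau>" using top 2 yS \<open>x \<noteq> \<rho>\<close> by auto
    then have "d x \<noteq> d \<tau>" using dx by (auto simp: desc_def)
    then have lt: "d \<tau> < d x" using dx by (simp add: desc_def)
    have "anc (d y - d \<tau>) y = anc (d y - d \<tau>) (anc 1 x)" using 2 by (simp add: anc_Suc)
    also have "\<dots> = anc (d x - d \<tau>) x" using lt dxy by (simp add: anc_add Suc_diff_le)
    also have "\<dots> = \<tau>" using dx by (simp add: desc_def)
    finally show ?thesis using dxy lt yI by (simp add: desc_def)
  qed
qed

lemma walk_desc:
  assumes "is_walk A w" "set w \<subseteq> S" "hd w = \<tau>" "\<tau> \<in> I" "\<tau> \<noteq> \<rho> \<Longrightarrow> p \<tau> \<notin> S"
  shows "\<forall>x\<in>set w. desc \<tau> x"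
  using assms(1-3)
proof (induction w rule: rev_induct)
  case Nil then show ?case by simp
next
  case (snoc y w)
  show ?case
  proof (cases "w = []")
    case True then show ?thesis using snoc.prems assms(4) by (simp add: desc_def)
  next
    case False
    have h: "A (last w) y \<and> is_walk A w" using is_walk_appendD[of A w "[y]"] snoc.prems False by auto
    have IH: "\<forall>x\<in>set w. desc \<tau> x" using snoc.IH h snoc.prems False by auto
    then have "desc \<tau> (last w)" using False by simp
    then have "desc \<tau> y" using desc_step[of \<tau> "last w" y S] h snoc.prems assms(5) by auto
    then show ?thesis using IH by simp
  qed
qed

lemma top_exists:
  assumes SI: "S \<subseteq> I" and ne: "S \<noteq> {}" and cS: "connected_set A S"
  shows "\<exists>\<tau>\<in>S. (\<forall>s\<in>S. desc \<tau> s) \<and> (\<forall>s\<in>S. s \<noteq> \<tau> \<longrightarrow> p s \<in> S)"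
proof -
  obtain \<tau> where \<tau>: "\<tau> \<in> S" "\<And>s. s \<in> S \<Longrightarrow> d \<tau> \<le> d s"
    using ex_has_least_nat[of "\<lambda>s. s \<in> S" _ d] ne by blast
  have tI: "\<tau> \<in> I" using \<tau> SI by blast
  have ptop: "p \<tau> \<notin> S" if "\<tau> \<noteq> \<rho>"
    using p_props[OF tI that] \<tau>(2)[of "p \<tau>"] by auto
  have D: "\<And>s. s \<in> S \<Longrightarrow> desc \<tau> s"
  proof -
    fix s assume "s \<in> S"
    then obtain w where "is_walk A w" "hd w = \<tau>" "last w = s" "set w \<subseteq> S"
      using connected_set_reach[OF cS \<tau>(1) \<open>s \<in> S\<close>] unfolding reach_def by blast
    then show "desc \<tau> s" using walk_desc[of w S \<tau>] tI ptop by (metis last_in_set is_walk_Nil)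
  qed
  have C: "p s \<in> S" if sS: "s \<in> S" and snt: "s \<noteq> \<tau>" for s
  proof (rule ccontr)
    assume ns: "p s \<notin> S"
    have sI: "s \<in> I" using sS SI by blast
    obtain w where "is_walk A w" "hd w = s" "last w = \<tau>" "set w \<subseteq> S"
      using connected_set_reach[OF cS sS \<tau>(1)] unfolding reach_def by blast
    then have "desc s \<tau>" using walk_desc[of w S s] sI ns by (metis last_in_set is_walk_Nil)
    moreover have "desc \<tau> s" using D sS .
    ultimately show False using snt by (auto simp: desc_def)
  qed
  show ?thesis using \<tau>(1) D C by blast
qed

end



locale tdk = rtree +
  fixes V :: "nat set" and E :: "nat \<Rightarrow> nat \<Rightarrow> bool" and B :: "nat \<Rightarrow> nat set" and k :: nat
  assumes td: "tree_decomposition V E I A B" and wd: "width_le I B k" and sg: "simple_graph V E"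
begin

definition Sv where "Sv v = {t \<in> I. v \<in> B t}"

definition top where "top v = (SOME \<tau>. \<tau> \<in> Sv v \<and> (\<forall>s\<in>Sv v. desc \<tau> s) \<and> (\<forall>s\<in>Sv v. s \<noteq> \<tau> \<longrightarrow> p s \<in> Sv v))"

lemma BV: "t \<in> I \<Longrightarrow> B t \<subseteq> V" using td by (simp add: tree_decomposition_def)

lemma top_props: assumes "v \<in> V"
  shows "top v \<in> Sv v" "\<And>s. s \<in> Sv v \<Longrightarrow> desc (top v) s" "\<And>s. s \<in> Sv v \<Longrightarrow> s \<noteq> top v \<Longrightarrow> p s \<in> Sv v"
proof -
  have "Sv v \<subseteq> I" "Sv v \<noteq> {}" "connected_set A (Sv v)"
    using td assms by (auto simp: tree_decomposition_def Sv_def)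
  then have ex: "\<exists>\<tau>. \<tau> \<in> Sv v \<and> (\<forall>s\<in>Sv v. desc \<tau> s) \<and> (\<forall>s\<in>Sv v. s \<noteq> \<tau> \<longrightarrow> p s \<in> Sv v)"
    using top_exists by blast
  have "top v \<in> Sv v \<and> (\<forall>s\<in>Sv v. desc (top v) s) \<and> (\<forall>s\<in>Sv v. s \<noteq> top v \<longrightarrow> p s \<in> Sv v)"
    unfolding top_def by (rule someI_ex[OF ex])
  then show "top v \<in> Sv v" "\<And>s. s \<in> Sv v \<Longrightarrow> desc (top v) s" "\<And>s. s \<in> Sv v \<Longrightarrow> s \<noteq> top v \<Longrightarrow> p s \<in> Sv v"
    by blast+
qed

definition HH where "HH u v \<longleftrightarrow> u \<noteq> v \<and> (\<exists>t\<in>I. u \<in> B t \<and> v \<in> B t)"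
definition rr where "rr v = d (top v)"

lemma key:
  assumes h: "HH u v" and le: "rr u \<le> rr v"
  shows "u \<in> B (top v)"
proof -
  obtain s where s: "s \<in> I" "u \<in> B s" "v \<in> B s" using h by (auto simp: HH_def)
  have uV: "u \<in> V" and vV: "v \<in> V" using BV s by auto
  have su: "s \<in> Sv u" and sv: "s \<in> Sv v" using s by (auto simp: Sv_def)
  have dv: "desc (top v) s" using top_props(2)[OF vV sv] .
  have du: "desc (top u) s" using top_props(2)[OF uV su] .
  have up: "j \<le> d s - rr u \<Longrightarrow> anc j s \<in> Sv u" for j
  proof (induction j)
    case 0 then show ?case using su by simp
  next
    case (Suc j)
    then have inS: "anc j s \<in> Sv u" by simp
    have dj: "d (anc j s) = d s - j" using anc_props[OF s(1), of j] Suc.prems by simp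
    have "rr u \<le> d s" using du by (simp add: desc_def rr_def)
    then have "d (anc j s) > d (top u)" using dj Suc.prems by (simp add: rr_def)
    then have "anc j s \<noteq> top u" by auto
    then have "p (anc j s) \<in> Sv u" using top_props(3)[OF uV inS] by simp
    then show ?case by (simp add: anc_Suc)
  qed
  have "anc (d s - rr v) s = top v" using dv by (simp add: desc_def rr_def)
  moreover have "d s - rr v \<le> d s - rr u" using le by simp
  then have "anc (d s - rr v) s \<in> Sv u" by (rule up)
  ultimately have "top v \<in> Sv u" by simp
  then show ?thesis by (simp add: Sv_def)
qed

lemma relim_ok: "relim V E HH rr k"
proof
  fix u v assume "E u v" then show "E v u" using sg by (simp add: simple_graph_def)
next
  fix u v assume e: "E u v"
  then have "u \<noteq> v" using sg by (simp add: simple_graph_def)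
  moreover have "\<exists>t\<in>I. u \<in> B t \<and> v \<in> B t" using td e by (simp add: tree_decomposition_def)
  ultimately show "HH u v" by (simp add: HH_def)
next
  fix u v assume "HH u v"
  then show "u \<in> V \<and> v \<in> V \<and> u \<noteq> v \<and> HH v u" using BV unfolding HH_def by blast
next
  fix v assume vV: "v \<in> V"
  let ?N = "{u. HH u v \<and> (rr u < rr v \<or> (rr u = rr v \<and> u < v))}"
  have tI: "top v \<in> I" and vt: "v \<in> B (top v)" using top_props(1)[OF vV] by (auto simp: Sv_def)
  have sub: "?N \<subseteq> B (top v) - {v}"
  proof
    fix u assume "u \<in> ?N"
    then have "HH u v" "rr u \<le> rr v" by auto
    then show "u \<in> B (top v) - {v}" using key[of u v] by (auto simp: HH_def)
  qed
  have fB: "finite (B (top v))" "card (B (top v)) \<le> k + 1" using wd tI by (auto simp: width_le_def)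
  have "card ?N \<le> card (B (top v) - {v})" using sub fB by (intro card_mono) auto
  also have "\<dots> = card (B (top v)) - 1" using vt fB by simp
  finally have "card ?N \<le> card (B (top v)) - 1" .
  moreover have "finite ?N" by (rule finite_subset[OF sub]) (use fB in simp)
  ultimately show "finite ?N \<and> card ?N \<le> k" using fB(2) by linarith
next
  fix v a b assume vV: "v \<in> V" and a: "a \<in> {u. HH u v \<and> (rr u < rr v \<or> (rr u = rr v \<and> u < v))}"
    and b: "b \<in> {u. HH u v \<and> (rr u < rr v \<or> (rr u = rr v \<and> u < v))}" and ab: "a \<noteq> b"
  have tI: "top v \<in> I" using top_props(1)[OF vV] by (auto simp: Sv_def)
  have "a \<in> B (top v)" "b \<in> B (top v)" using key a b by auto
  then show "HH a b" using tI ab by (auto simp: HH_def)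
qed

end

theorem mainTheorem13:
  fixes k :: nat
  shows "\<exists>(W::nat set) F. simple_graph W F \<and> treewidth_le W F k \<and>
           (\<forall>(V::nat set) E. simple_graph V E \<and> treewidth_le V E k
               \<longrightarrow> induced_subgraph_of V E W F)"
proof (intro exI conjI allI impI)
  show "simple_graph (WW k) (FW k)" by (rule W_simple)
  show "treewidth_le (WW k) (FW k) k" by (rule W_tw)
  fix V :: "nat set" and E assume a: "simple_graph V E \<and> treewidth_le V E k"
  then obtain I :: "nat set" and A B where td: "tree_decomposition V E I A B" and w: "width_le I B k"
    unfolding treewidth_le_def by blast
  then have tr: "is_tree I A" by (simp add: tree_decomposition_def)
  then obtain \<rho> where \<rho>: "\<rho> \<in> I" by (auto simp: is_tree_def)
  interpret T: tdk I A \<rho> V E B k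
    unfolding tdk_def tdk_axioms_def rtree_def using tr \<rho> td w a by blast
  interpret R: relim V E T.HH T.rr k by (rule T.relim_ok)
  show "induced_subgraph_of V E (WW k) (FW k)" by (rule R.embeds)
qed


end
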